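(* Let $q\in(0,\tfrac12)$ and let $T\sim U(1,2)$, $S\sim U(-1,0)$ be independent. Let $p_3^{PD}$ be the probability that $$P_{T,S}(x)=(T+S-1)x^3+\big(1-T-2S+q(S-1-T)\big)x^2+\big(S+q(T-S)\big)x$$ has exactly three distinct roots in $[0,1]$. Then $$p_3^{PD}=\frac{1}{1-2q}\,\mathrm{Area}(D\cap D_2),$$ where $D=\{(x,y)\in\mathbb{R}^2:\ -1<x<0,\ -\frac{x^2}{4q}-q<y<-q\}$ and $D_2$ is the open triangle with vertices $M=(-q,-(1-q))$, $N=\big(0,-\frac{1-2q}{1-q}\big)$, $O=(0,0)$, i.e. $D_2=\{(x,y):\ -q<x<0,\ \frac{qx-(1-2q)}{1-q}<y<\frac{(1-q)x}{q}\}$.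
   Context: "Area" denotes two-dimensional Lebesgue measure. *)

theory Defs
  imports "HOL-Analysis.Analysis"
begin

definition PD_poly :: "real \<Rightarrow> real \<Rightarrow> real \<Rightarrow> real \<Rightarrow> real" where
  "PD_poly q t s x = (t + s - 1) * x ^ 3 + (1 - t - 2 * s + q * (s - 1 - t)) * x ^ 2
     + (s + q * (t - s)) * x"

text \<open>Event: P_{T,S} has exactly three distinct roots in [0,1]
  (card of an infinite set is 0, so the identically-zero case is excluded).\<close>
definition three_roots :: "real \<Rightarrow> real \<Rightarrow> real \<Rightarrow> bool" where
  "three_roots q t s \<longleftrightarrow> card {x \<in> {0..1}. PD_poly q t s x = 0} = 3"

text \<open>Joint law of independent T ~ U(1,2), S ~ U(-1,0): uniform on the rectangle.\<close>
definition TS_law :: "(real \<times> real) measure" where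
  "TS_law = uniform_measure lborel ({1<..<2} \<times> {-1<..<0})"

definition p3PD :: "real \<Rightarrow> real" where
  "p3PD q = measure TS_law {(t, s). three_roots q t s}"

definition regD :: "real \<Rightarrow> (real \<times> real) set" where
  "regD q = {(x, y). -1 < x \<and> x < 0 \<and> - (x^2 / (4 * q)) - q < y \<and> y < - q}"

definition regD2 :: "real \<Rightarrow> (real \<times> real) set" where
  "regD2 q = {(x, y). -q < x \<and> x < 0 \<and> (q * x - (1 - 2 * q)) / (1 - q) < y
                        \<and> y < (1 - q) * x / q}"

end

theory Submission
  imports Defs "HOL-Library.Quadratic_Discriminant"
begin


lemma aff1d:
  fixes c t :: real and B :: "real set"
  assumes "c \<noteq> 0" "B \<in> sets borel"
  shows "emeasure lborel B = ennreal \<bar>c\<bar> * emeasure lborel ((\<lambda>x. t + c * x) -` B)"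
proof -
  have m: "(\<lambda>x. t + c * x) \<in> borel_measurable borel" by measurable
  have "emeasure lborel B = emeasure (density (distr lborel borel (\<lambda>x. t + c * x)) (\<lambda>_. ennreal (abs c))) B"
    using lborel_real_affine[OF assms(1), of t] by simp
  also have "\<dots> = ennreal \<bar>c\<bar> * emeasure (distr lborel borel (\<lambda>x. t + c * x)) B"
    using assms by (simp add: emeasure_density nn_integral_cmult_indicator)
  also have "\<dots> = ennreal \<bar>c\<bar> * emeasure lborel ((\<lambda>x. t + c * x) -` B)"
    using assms m by (simp add: emeasure_distr)
  finally show ?thesis .
qed

lemma sets_pair_lborel: "sets (lborel \<Otimes>\<^sub>M lborel) = sets (borel :: (real\<times>real) measure)"
  by (metis lborel_prod sets_lborel)

lemma shear_x:
  fixes A :: "(real \<times> real) set" and a k e :: real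
  assumes "a \<noteq> 0" "A \<in> sets borel"
  shows "emeasure lborel A = ennreal \<bar>a\<bar> * emeasure lborel ((\<lambda>p. (a * fst p + k * snd p + e, snd p)) -` A)"
proof -
  have P: "pair_sigma_finite lborel (lborel::real measure)" by unfold_locales
  let ?F = "(\<lambda>p. (a * fst p + k * snd p + e, snd p)) :: real\<times>real \<Rightarrow> real\<times>real"
  have mF: "?F \<in> borel_measurable borel"
    by (intro borel_measurable_continuous_onI continuous_intros)
  have A': "A \<in> sets (lborel \<Otimes>\<^sub>M lborel)" by (subst sets_pair_lborel) (rule assms(2))
  have FA: "?F -` A \<in> sets borel"
    using measurable_sets[OF mF assms(2)] by simp
  hence FA': "?F -` A \<in> sets (lborel \<Otimes>\<^sub>M lborel)" by (subst sets_pair_lborel)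
  have sl: "(\<lambda>x. (x, y)) -` A \<in> sets borel" for y
  proof -
    have "(\<lambda>x::real. (x, y)) \<in> borel_measurable borel" by measurable
    from measurable_sets[OF this assms(2)] show ?thesis by simp
  qed
  have "emeasure lborel A = emeasure (lborel \<Otimes>\<^sub>M lborel) A" by (simp add: lborel_prod)
  also have "\<dots> = (\<integral>\<^sup>+y. emeasure lborel ((\<lambda>x. (x, y)) -` A) \<partial>lborel)"
    using pair_sigma_finite.emeasure_pair_measure_alt2[OF P A'] .
  also have "\<dots> = (\<integral>\<^sup>+y. ennreal \<bar>a\<bar> * emeasure lborel ((\<lambda>x. (x, y)) -` (?F -` A)) \<partial>lborel)"
  proof (rule nn_integral_cong)
    fix y :: real
    have "emeasure lborel ((\<lambda>x. (x, y)) -` A) = ennreal \<bar>a\<bar> * emeasure lborel ((\<lambda>x. (k*y+e) + a * x) -` ((\<lambda>x. (x, y)) -` A))"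
      using aff1d[OF assms(1) sl] .
    also have "(\<lambda>x. (k*y+e) + a * x) -` ((\<lambda>x. (x, y)) -` A) = (\<lambda>x. (x, y)) -` (?F -` A)"
      by (auto simp: algebra_simps)
    finally show "emeasure lborel ((\<lambda>x. (x, y)) -` A) = ennreal \<bar>a\<bar> * emeasure lborel ((\<lambda>x. (x, y)) -` (?F -` A))" .
  qed
  also have "\<dots> = ennreal \<bar>a\<bar> * (\<integral>\<^sup>+y. emeasure lborel ((\<lambda>x. (x, y)) -` (?F -` A)) \<partial>lborel)"
    by (rule nn_integral_cmult) (rule pair_sigma_finite.measurable_emeasure_Pair2 [OF P FA'])
  also have "\<dots> = ennreal \<bar>a\<bar> * emeasure lborel (?F -` A)"
    using pair_sigma_finite.emeasure_pair_measure_alt2[OF P FA'] by (simp add: lborel_prod)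
  finally show ?thesis .
qed

lemma shear_y:
  fixes A :: "(real \<times> real) set" and b k f :: real
  assumes "b \<noteq> 0" "A \<in> sets borel"
  shows "emeasure lborel A = ennreal \<bar>b\<bar> * emeasure lborel ((\<lambda>p. (fst p, b * snd p + k * fst p + f)) -` A)"
proof -
  have P: "sigma_finite_measure (lborel::real measure)" by unfold_locales
  have P2: "pair_sigma_finite lborel (lborel::real measure)" by unfold_locales
  let ?F = "(\<lambda>p. (fst p, b * snd p + k * fst p + f)) :: real\<times>real \<Rightarrow> real\<times>real"
  have mF: "?F \<in> borel_measurable borel"
    by (intro borel_measurable_continuous_onI continuous_intros)
  have A': "A \<in> sets (lborel \<Otimes>\<^sub>M lborel)" by (subst sets_pair_lborel) (rule assms(2))
  have FA: "?F -` A \<in> sets borel"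
    using measurable_sets[OF mF assms(2)] by simp
  hence FA': "?F -` A \<in> sets (lborel \<Otimes>\<^sub>M lborel)" by (subst sets_pair_lborel)
  have sl: "Pair x -` A \<in> sets borel" for x :: real
  proof -
    have "(\<lambda>y::real. (x, y)) \<in> borel_measurable borel" by measurable
    from measurable_sets[OF this assms(2)] show ?thesis by (simp add: vimage_def)
  qed
  have "emeasure lborel A = emeasure (lborel \<Otimes>\<^sub>M lborel) A" by (simp add: lborel_prod)
  also have "\<dots> = (\<integral>\<^sup>+x. emeasure lborel (Pair x -` A) \<partial>lborel)"
    using sigma_finite_measure.emeasure_pair_measure_alt[OF P A'] .
  also have "\<dots> = (\<integral>\<^sup>+x. ennreal \<bar>b\<bar> * emeasure lborel (Pair x -` (?F -` A)) \<partial>lborel)"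
  proof (rule nn_integral_cong)
    fix x :: real
    have "emeasure lborel (Pair x -` A) = ennreal \<bar>b\<bar> * emeasure lborel ((\<lambda>y. (k*x+f) + b * y) -` (Pair x -` A))"
      using aff1d[OF assms(1) sl] .
    also have "(\<lambda>y. (k*x+f) + b * y) -` (Pair x -` A) = Pair x -` (?F -` A)"
      by (auto simp: algebra_simps)
    finally show "emeasure lborel (Pair x -` A) = ennreal \<bar>b\<bar> * emeasure lborel (Pair x -` (?F -` A))" .
  qed
  also have "\<dots> = ennreal \<bar>b\<bar> * (\<integral>\<^sup>+x. emeasure lborel (Pair x -` (?F -` A)) \<partial>lborel)"
    by (rule nn_integral_cmult) (rule pair_sigma_finite.measurable_emeasure_Pair1 [OF P2 FA'])
  also have "\<dots> = ennreal \<bar>b\<bar> * emeasure lborel (?F -` A)"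
    using sigma_finite_measure.emeasure_pair_measure_alt[OF P FA'] by (simp add: lborel_prod)
  finally show ?thesis .
qed

lemma Tmeas:
  fixes q :: real and A :: "(real \<times> real) set"
  assumes q: "0 < q" "q < 1/2" and A: "A \<in> sets borel"
  shows "emeasure lborel A = ennreal (1 - 2*q) *
    emeasure lborel ((\<lambda>p. ((1-q) * fst p + q * snd p - (1-q), q * fst p + (1-q) * snd p - q)) -` A)"
proof -
  let ?F2 = "(\<lambda>p. (fst p, ((1-2*q)/(1-q)) * snd p + (q/(1-q)) * fst p + 0)) :: real\<times>real \<Rightarrow> real\<times>real"
  let ?F1 = "(\<lambda>p. ((1-q) * fst p + q * snd p + (-(1-q)), snd p)) :: real\<times>real \<Rightarrow> real\<times>real"
  have b0: "(1-2*q)/(1-q) \<noteq> 0" and a0: "1 - q \<noteq> 0" using q by auto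
  have mF: "?F2 \<in> borel_measurable borel"
    by (intro borel_measurable_continuous_onI continuous_intros)
  have FA: "?F2 -` A \<in> sets borel"
    using measurable_sets[OF mF A] by simp
  have e: "?F1 -` (?F2 -` A) = (\<lambda>p. ((1-q) * fst p + q * snd p - (1-q), q * fst p + (1-q) * snd p - q)) -` A"
  proof -
    have k: "((1-2*q)/(1-q)) * y + (q/(1-q)) * ((1-q)*x + q*y + -(1-q)) + 0 = q*x + (1-q)*y - q" for x y
    proof -
      have "((1-2*q)/(1-q)) * y + (q/(1-q)) * ((1-q)*x + q*y + -(1-q)) = ((1-2*q)* y + q * ((1-q)*x + q*y + -(1-q)))/(1-q)"
        by (simp add: add_divide_distrib)
      also have "(1-2*q)* y + q * ((1-q)*x + q*y + -(1-q)) = (1-q) * (q*x + (1-q)*y - q)"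
        by (simp add: algebra_simps power2_eq_square)
      also have "\<dots> / (1-q) = q*x + (1-q)*y - q" using a0 by simp
      finally show ?thesis by simp
    qed
    have "?F2 (?F1 p) = ((1-q) * fst p + q * snd p - (1-q), q * fst p + (1-q) * snd p - q)" for p
      using k[of "fst p" "snd p"] k[of "snd p" "fst p"] by (simp only: prod_eq_iff fst_conv snd_conv) simp
    hence "?F2 \<circ> ?F1 = (\<lambda>p. ((1-q) * fst p + q * snd p - (1-q), q * fst p + (1-q) * snd p - q))" unfolding comp_def by (intro ext)
    thus ?thesis by (simp only: vimage_comp)
  qed
  have "emeasure lborel A = ennreal \<bar>(1-2*q)/(1-q)\<bar> * emeasure lborel (?F2 -` A)"
    by (rule shear_y[OF b0 A])
  also have "emeasure lborel (?F2 -` A) = ennreal \<bar>1-q\<bar> * emeasure lborel (?F1 -` (?F2 -` A))"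
    by (rule shear_x[OF a0 FA])
  also have "ennreal \<bar>(1-2*q)/(1-q)\<bar> * (ennreal \<bar>1-q\<bar> * emeasure lborel (?F1 -` (?F2 -` A)))
     = ennreal (\<bar>(1-2*q)/(1-q)\<bar> * \<bar>1-q\<bar>) * emeasure lborel (?F1 -` (?F2 -` A))"
    by (simp only: ennreal_mult[OF abs_ge_zero abs_ge_zero] mult.assoc)
  also have "\<bar>(1-2*q)/(1-q)\<bar> * \<bar>1-q\<bar> = 1 - 2*q"
    using q by (simp add: abs_mult[symmetric])
  finally show ?thesis using e by simp
qed



lemma two_roots_cond:
  fixes a b c q r1 r2 :: real
  assumes q: "q > 0" and sum: "a + b + c = -q"
    and r: "r1 \<noteq> r2" "0 < r1" "r1 \<le> 1" "0 < r2" "r2 \<le> 1"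
    and z1: "a*r1^2 + b*r1 + c = 0" and z2: "a*r2^2 + b*r2 + c = 0"
  shows "a < 0 \<and> c < 0 \<and> b > 0 \<and> 2*a + b < 0 \<and> b^2 - 4*a*c > 0"
proof -
  have "(r1 - r2) * (a*(r1+r2) + b) = 0"
    using z1 z2 by (simp add: algebra_simps power2_eq_square)
  hence hb: "b = -a*(r1+r2)" using r(1) by simp
  have hc: "c = a*r1*r2" using z1 hb by (simp add: algebra_simps power2_eq_square)
  have h3: "a*((1-r1)*(1-r2)) = -q" using sum hb hc by (simp add: algebra_simps)
  have "r1 \<noteq> 1" proof assume "r1 = 1" thus False using z1 sum q by simp qed
  have "r2 \<noteq> 1" proof assume "r2 = 1" thus False using z2 sum q by simp qed
  have pos: "(1-r1)*(1-r2) > 0" using r \<open>r1 \<noteq> 1\<close> \<open>r2 \<noteq> 1\<close> by simp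
  have ha: "a < 0"
  proof (rule ccontr)
    assume "\<not> a < 0" hence "a*((1-r1)*(1-r2)) \<ge> 0" using pos by simp
    thus False using h3 q by simp
  qed
  have "r1*r2 > 0" using r by simp
  hence "c < 0" using hc ha by (simp add: mult_neg_pos mult.assoc)
  moreover have "b > 0" using hb ha r by (simp add: mult_neg_pos)
  moreover have "2*a+b = a*(2 - r1 - r2)" using hb by (simp add: algebra_simps)
  hence "2*a+b < 0" using ha r \<open>r1 \<noteq> 1\<close> \<open>r2 \<noteq> 1\<close> by (simp add: mult_neg_pos)
  moreover have "b^2 - 4*a*c = a^2 * (r1-r2)^2" unfolding hb hc by (simp add: algebra_simps power2_eq_square)
  hence "b^2 - 4*a*c > 0" using ha r(1) by simp
  ultimately show ?thesis using ha by simp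
qed

lemma cond_roots:
  fixes a b c q :: real
  assumes q: "q > 0" and sum: "a + b + c = -q"
  shows "card {x \<in> {0..1}. x * (a*x^2 + b*x + c) = 0} = 3 \<longleftrightarrow>
         (a < 0 \<and> c < 0 \<and> b > 0 \<and> 2*a + b < 0 \<and> b^2 - 4*a*c > 0)"
proof
  let ?S = "{x \<in> {0..1}. x * (a*x^2 + b*x + c) = 0}"
  assume "card ?S = 3"
  then obtain x y z where S: "?S = {x,y,z}" and d: "x \<noteq> y" "y \<noteq> z" "x \<noteq> z"
    unfolding card_3_iff by blast
  let ?C = "a < 0 \<and> c < 0 \<and> b > 0 \<and> 2*a + b < 0 \<and> b^2 - 4*a*c > 0"
  have mem: "w \<in> ?S" if "w \<in> {x,y,z}" for w using S that by blast
  have G: "?C" if "0 < r1" "0 < r2" "r1 \<noteq> r2" "r1 \<in> ?S" "r2 \<in> ?S" for r1 r2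
  proof -
    have "a*r1^2 + b*r1 + c = 0" using that by simp
    moreover have "a*r2^2 + b*r2 + c = 0" using that by simp
    moreover have "r1 \<le> 1" "r2 \<le> 1" using that by auto
    ultimately show ?thesis using two_roots_cond[OF q sum, of r1 r2] that by blast
  qed
  have Gw: "?C" if "r1 \<in> {x,y,z}" "r2 \<in> {x,y,z}" "r1 \<noteq> 0" "r2 \<noteq> 0" "r1 \<noteq> r2" for r1 r2
  proof -
    have "r1 \<in> ?S" "r2 \<in> ?S" using mem that by blast+
    hence "0 \<le> r1" "0 \<le> r2" by auto
    hence "0 < r1" "0 < r2" using that by auto
    thus ?thesis using G \<open>r1 \<in> ?S\<close> \<open>r2 \<in> ?S\<close> that(5) by blast
  qed
  show "a < 0 \<and> c < 0 \<and> b > 0 \<and> 2*a + b < 0 \<and> b^2 - 4*a*c > 0"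
  proof (cases "x = 0")
    case True
    show ?thesis by (rule Gw[of y z]) (use d True in auto)
  next
    case False
    note xn = this
    show ?thesis
    proof (cases "y = 0")
      case True
      show ?thesis by (rule Gw[of x z]) (use d True xn in auto)
    next
      case False
      show ?thesis by (rule Gw[of x y]) (use d False xn in auto)
    qed
  qed
next
  let ?S = "{x \<in> {0..1}. x * (a*x^2 + b*x + c) = 0}"
  assume H: "a < 0 \<and> c < 0 \<and> b > 0 \<and> 2*a + b < 0 \<and> b^2 - 4*a*c > 0"
  hence a: "a < 0" and c: "c < 0" and b: "b > 0" and v: "2*a+b < 0" and D: "discrim a b c > 0"
    by (auto simp: discrim_def)
  define r1 where "r1 = (-b + sqrt (discrim a b c)) / (2*a)"
  define r2 where "r2 = (-b - sqrt (discrim a b c)) / (2*a)"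
  have sq: "sqrt (discrim a b c) > 0" using D by simp
  have s1: "sqrt (discrim a b c) < b"
  proof -
    have "discrim a b c < b^2" using a c by (simp add: discrim_def mult_neg_neg)
    hence "sqrt (discrim a b c) < sqrt (b^2)" by (rule real_sqrt_less_mono)
    thus ?thesis using b by simp
  qed
  have s2: "sqrt (discrim a b c) < -2*a - b"
  proof -
    have "discrim a b c < (-2*a - b)^2"
    proof -
      have "(-2*a - b)^2 - discrim a b c = 4*a*(a+b+c)" by (simp add: discrim_def algebra_simps power2_eq_square)
      also have "\<dots> > 0" using a sum q by (simp add: mult_neg_neg mult_neg_pos)
      finally show ?thesis by simp
    qed
    hence "sqrt (discrim a b c) < sqrt ((-2*a - b)^2)" by (rule real_sqrt_less_mono)
    thus ?thesis using v by simp
  qed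
  have r1pos: "0 < r1" unfolding r1_def using a s1 by (intro divide_neg_neg; linarith)
  have r2pos: "0 < r2" unfolding r2_def using a b sq by (intro divide_neg_neg; linarith)
  have r1le: "r1 < 1" unfolding r1_def using a v sq by (subst neg_divide_less_eq) (linarith, linarith)
  have r2le: "r2 < 1" unfolding r2_def using a s2 by (subst neg_divide_less_eq) (linarith, linarith)
  have r12: "r1 \<noteq> r2" unfolding r1_def r2_def using a sq by (simp add: divide_cancel_right)
  have a0: "a \<noteq> 0" using a by simp
  have "?S = {0, r1, r2}"
  proof (rule set_eqI, rule iffI)
    fix w assume "w \<in> ?S"
    hence "w = 0 \<or> a*w^2 + b*w + c = 0" by simp
    thus "w \<in> {0, r1, r2}" using discriminant_iff[OF a0, of w b c] r1_def r2_def by auto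
  next
    fix w assume "w \<in> {0, r1, r2}"
    moreover have "a*r1^2 + b*r1 + c = 0"
      by (rule iffD2[OF discriminant_iff[OF a0]]) (use D r1_def in simp)
    moreover have "a*r2^2 + b*r2 + c = 0"
      by (rule iffD2[OF discriminant_iff[OF a0]]) (use D r2_def in simp)
    ultimately show "w \<in> ?S" using r1pos r2pos r1le r2le by auto
  qed
  thus "card ?S = 3" using r1pos r2pos r12 by simp
qed


lemma xy_equiv:
  fixes q x y :: real
  assumes q: "0 < q" "q < 1/2"
  shows "((1-q)*x - q*y > 0 \<and> (1-q)*x - q*y < 1-2*q \<and> (1-q)*y - q*x < 0 \<and> (1-q)*y - q*x > -(1-2*q)
          \<and> x+y<0 \<and> y+q<0 \<and> -x-2*y-2*q>0 \<and> x-2*q<0 \<and> x^2+4*q*(y+q)>0)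
     \<longleftrightarrow> (x,y) \<in> regD q \<inter> regD2 q" (is "?L \<longleftrightarrow> ?R")
proof
  have q1: "0 < 1 - q" using q by simp
  have q2: "0 < 1 - 2*q" using q by simp
  have id1: "(1-2*q)*x = (1-q)*((1-q)*x - q*y) + q*((1-q)*y - q*x)" by (simp add: algebra_simps power2_eq_square)
  have eD: "- (x^2 / (4 * q)) - q < y \<longleftrightarrow> x^2+4*q*(y+q)>0"
  proof -
    have "- (x^2 / (4 * q)) - q < y \<longleftrightarrow> 4*q*(- (x^2 / (4 * q)) - q) < 4*q*y" using q by simp
    also have "4*q*(- (x^2 / (4 * q)) - q) = - (x^2) - 4*q*q" using q by (simp add: algebra_simps)
    finally show ?thesis by (simp add: algebra_simps) linarith
  qed
  have eL: "(q * x - (1 - 2 * q)) / (1 - q) < y \<longleftrightarrow> (1-q)*y - q*x > -(1-2*q)"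
    using q1 by (simp add: pos_divide_less_eq algebra_simps)
  have eU: "y < (1 - q) * x / q \<longleftrightarrow> (1-q)*x - q*y > 0"
    using q by (simp add: pos_less_divide_eq algebra_simps)
  {
    assume L: ?L
    have xneg: "x < 0"
    proof (rule ccontr)
      assume "\<not> x < 0" hence x0: "x \<ge> 0" by simp
      have "x * (x - 2*q) \<le> 0" using x0 L by (simp add: mult_nonneg_nonpos)
      moreover have "x^2 + 4*q*(y+q) > 0" using L by simp
      moreover have "2*q*(-x-2*y-2*q) > 0" using L q by simp
      ultimately show False by (simp add: algebra_simps power2_eq_square)
    qed
    have "q * ((1-q)*y - q*x) > q * (-(1-2*q))" using L q by (intro mult_strict_left_mono) auto
    moreover have "(1-q)*((1-q)*x - q*y) > 0" using L q1 by simp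
    ultimately have "(1-2*q)*x > (1-2*q)*(-q)" using id1 by (simp add: algebra_simps)
    hence xq: "x > -q" using q2 mult_less_cancel_left_pos[of "1-2*q" "-q" x] by simp
    show ?R using L xneg xq eD eL eU unfolding regD_def regD2_def by auto
  }
  {
    assume R: ?R
    hence x: "-q < x" "x < 0" and y: "y < -q" and D: "x^2+4*q*(y+q)>0"
      and lo: "(1-q)*y - q*x > -(1-2*q)" and up: "(1-q)*x - q*y > 0"
      using eD eL eU unfolding regD_def regD2_def by auto
    have s0: "(1-q)*y - q*x < 0"
    proof -
      have "(1-q)*y < (1-q)*(-q)" using y q1 by (intro mult_strict_left_mono) auto
      moreover have "q*x > q*(-q)" using x q by (intro mult_strict_left_mono) auto
      moreover have "q*(1-2*q) > 0" using q q2 by simp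
      ultimately show ?thesis by (simp add: algebra_simps)
    qed
    have t2: "(1-q)*x - q*y < 1-2*q"
    proof -
      have "q * ((1-q)*y - q*x) > q * (-(1-2*q))" using lo q by (intro mult_strict_left_mono) auto
      moreover have "(1-2*q)*x < (1-2*q)*(1-2*q)" using x q2 q by (intro mult_strict_left_mono) auto
      ultimately have "(1-q)*((1-q)*x - q*y) < (1-q)*(1-2*q)" using id1 by (simp add: algebra_simps)
      thus ?thesis using q1 by simp
    qed
    show ?L using x y D lo up s0 t2 q by auto
  }
qed



lemma PD_factor: "PD_poly q t s x = x * ((t+s-1)*x^2 + (1-t-2* s+q*(s-1-t))*x + (s+q*(t-s)))"
  unfolding PD_poly_def by (simp add: algebra_simps power2_eq_square power3_eq_cube)

lemma ts_equiv:
  fixes q t s :: real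
  assumes q: "0 < q" "q < 1/2"
  defines "x \<equiv> (1-q)*t + q* s - (1-q)" and "y \<equiv> q*t + (1-q)* s - q"
  shows "(1 < t \<and> t < 2 \<and> -1 < s \<and> s < 0 \<and>
          (t+s-1 < 0 \<and> s+q*(t-s) < 0 \<and> 1-t-2* s+q*(s-1-t) > 0 \<and> 2*(t+s-1) + (1-t-2* s+q*(s-1-t)) < 0
           \<and> (1-t-2* s+q*(s-1-t))^2 - 4*(t+s-1)*(s+q*(t-s)) > 0))
     \<longleftrightarrow> ((1-q)*x - q*y > 0 \<and> (1-q)*x - q*y < 1-2*q \<and> (1-q)*y - q*x < 0 \<and> (1-q)*y - q*x > -(1-2*q)
          \<and> x+y<0 \<and> y+q<0 \<and> -x-2*y-2*q>0 \<and> x-2*q<0 \<and> x^2+4*q*(y+q)>0)"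
proof -
  have q2: "0 < 1 - 2*q" using q by simp
  have e1: "(1-q)*x - q*y = (1-2*q)*(t-1)" unfolding x_def y_def by (simp add: algebra_simps power2_eq_square)
  have e2: "(1-q)*y - q*x = (1-2*q)* s" unfolding x_def y_def by (simp add: algebra_simps power2_eq_square)
  have e3: "t+s-1 = x+y" unfolding x_def y_def by (simp add: algebra_simps)
  have e4: "s+q*(t-s) = y+q" unfolding x_def y_def by (simp add: algebra_simps)
  have e5: "1-t-2* s+q*(s-1-t) = -x-2*y-2*q" unfolding x_def y_def by (simp add: algebra_simps)
  have e6: "2*(x+y) + (-x-2*y-2*q) = x - 2*q" by (simp add: algebra_simps)
  have e7: "(-x-2*y-2*q)^2 - 4*(x+y)*(y+q) = x^2+4*q*(y+q)"
    by (simp add: algebra_simps power2_eq_square)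
  have c1: "1 < t \<longleftrightarrow> (1-2*q)*(t-1) > 0" using q2 by (simp add: zero_less_mult_iff)
  have c2: "t < 2 \<longleftrightarrow> (1-2*q)*(t-1) < 1-2*q"
    using q2 mult_less_cancel_left_pos[of "1-2*q" "t-1" 1] by simp
  have c3: "s < 0 \<longleftrightarrow> (1-2*q)* s < 0" using q2 by (simp add: mult_less_0_iff)
  have c4: "-1 < s \<longleftrightarrow> (1-2*q)* s > -(1-2*q)"
    using q2 mult_less_cancel_left_pos[of "1-2*q" "-1" s] by simp
  show ?thesis unfolding e1 e2 e3 e4 e5 e6 e7 c1 c2 c3 c4 by blast
qed


theorem proposition2p4:
  fixes q :: real
  assumes "0 < q" and "q < 1/2"
  shows "p3PD q = (1 / (1 - 2 * q)) * measure lborel (regD q \<inter> regD2 q)"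
proof -
  have q0: "0 < q" and qh: "q < 1/2" using assms by auto
  have q2: "0 < 1 - 2*q" using assms by simp
  define T where "T = (\<lambda>p::real\<times>real. ((1-q) * fst p + q * snd p - (1-q), q * fst p + (1-q) * snd p - q))"
  define R where "R = ({1<..<2} \<times> {-1<..<0} :: (real\<times>real) set)"
  define Ev where "Ev = {(t, s). three_roots q t s}"
  define A where "A = regD q \<inter> regD2 q"
  have tr: "three_roots q t s \<longleftrightarrow> (t+s-1 < 0 \<and> s+q*(t-s) < 0 \<and> 1-t-2 * s+q*(s-1-t) > 0
      \<and> 2*(t+s-1) + (1-t-2 * s+q*(s-1-t)) < 0
      \<and> (1-t-2 * s+q*(s-1-t))^2 - 4*(t+s-1)*(s+q*(t-s)) > 0)" for t s
  proof -
    have sum: "(t+s-1) + (1-t-2 * s+q*(s-1-t)) + (s+q*(t-s)) = -q" by (simp add: algebra_simps)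
    show ?thesis unfolding three_roots_def PD_factor using cond_roots[OF q0 sum] .
  qed
  have pre: "R \<inter> Ev = T -` A"
  proof (rule set_eqI)
    fix p :: "real \<times> real"
    obtain t s where p: "p = (t, s)" by (cases p)
    have e1: "p \<in> R \<inter> Ev \<longleftrightarrow> (1 < t \<and> t < 2 \<and> -1 < s \<and> s < 0 \<and> three_roots q t s)"
      by (auto simp: p R_def Ev_def)
    have e2: "p \<in> T -` A \<longleftrightarrow> ((1-q)*t + q * s - (1-q), q*t + (1-q) * s - q) \<in> regD q \<inter> regD2 q"
      by (simp add: p T_def A_def)
    note e1
    also have "(1 < t \<and> t < 2 \<and> -1 < s \<and> s < 0 \<and> three_roots q t s) \<longleftrightarrow> (1 < t \<and> t < 2 \<and> -1 < s \<and> s < 0 \<and>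
          (t+s-1 < 0 \<and> s+q*(t-s) < 0 \<and> 1-t-2 * s+q*(s-1-t) > 0 \<and> 2*(t+s-1) + (1-t-2 * s+q*(s-1-t)) < 0
           \<and> (1-t-2 * s+q*(s-1-t))^2 - 4*(t+s-1)*(s+q*(t-s)) > 0))"
      by (simp only: tr)
    also note ts_equiv[OF q0 qh, of t s]
    also note xy_equiv[OF q0 qh, of "(1-q)*t + q * s - (1-q)" "q*t + (1-q) * s - q"]
    also note e2[symmetric]
    finally show "p \<in> R \<inter> Ev \<longleftrightarrow> p \<in> T -` A" .
  qed
  have Ev_meas: "Ev \<in> sets borel"
  proof -
    have "Ev = {p. fst p+snd p-1 < 0 \<and> snd p+q*(fst p-snd p) < 0 \<and> 1-fst p-2 * snd p+q*(snd p-1-fst p) > 0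
      \<and> 2*(fst p+snd p-1) + (1-fst p-2 * snd p+q*(snd p-1-fst p)) < 0
      \<and> (1-fst p-2 * snd p+q*(snd p-1-fst p))^2 - 4*(fst p+snd p-1)*(snd p+q*(fst p-snd p)) > 0}"
      unfolding Ev_def using tr by auto
    also have "\<dots> \<in> sets borel"
      using q0 qh by (auto intro!: borel_open open_Collect_conj open_Collect_less continuous_intros)
    finally show ?thesis .
  qed
  have A_meas: "A \<in> sets borel"
  proof -
    have "A = {p. -1 < fst p \<and> fst p < 0 \<and> - (fst p^2 / (4 * q)) - q < snd p \<and> snd p < - q
        \<and> -q < fst p \<and> (q * fst p - (1 - 2 * q)) / (1 - q) < snd p \<and> snd p < (1 - q) * fst p / q}"
      unfolding A_def regD_def regD2_def by auto
    also have "\<dots> \<in> sets borel"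
      using q0 qh by (auto intro!: borel_open open_Collect_conj open_Collect_less continuous_intros)
    finally show ?thesis .
  qed
  have R_meas: "R \<in> sets borel" unfolding R_def by (intro borel_open open_Times) auto
  have R1: "emeasure lborel R = 1"
  proof -
    have P: "sigma_finite_measure (lborel::real measure)" by unfold_locales
    have "emeasure lborel R = emeasure (lborel \<Otimes>\<^sub>M lborel) R" by (simp add: lborel_prod)
    also have "\<dots> = emeasure lborel {1<..<2::real} * emeasure lborel {-1<..<0::real}"
      unfolding R_def by (rule sigma_finite_measure.emeasure_pair_measure_Times[OF P]) auto
    also have "\<dots> = 1" by simp
    finally show ?thesis .
  qed
  have fin: "emeasure lborel (T -` A) \<le> 1"
    using emeasure_mono[of "R \<inter> Ev" R lborel] R_meas R1 pre by force
  have "emeasure lborel A = ennreal (1 - 2*q) * emeasure lborel (T -` A)"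
    unfolding T_def by (rule Tmeas[OF q0 qh A_meas])
  hence mA: "measure lborel A = (1 - 2*q) * measure lborel (T -` A)"
    using q2 by (simp add: measure_def enn2real_mult)
  have "p3PD q = measure lborel (R \<inter> Ev) / measure lborel R"
    unfolding p3PD_def TS_law_def R_def[symmetric] Ev_def[symmetric]
    using R1 Ev_meas by (subst measure_uniform_measure) auto
  also have "measure lborel R = 1" using R1 by (simp add: measure_def)
  also have "measure lborel (R \<inter> Ev) = measure lborel A / (1 - 2*q)"
    using mA pre q2 by simp
  finally show ?thesis unfolding A_def by simp
qed

end
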